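(* Let $\mu>0$, $u_a\in\mathbb{R}$, $\alpha_\pm\ge0$, $u_->u_+$, and Riemann data $(\alpha_0,u_0)=(\alpha_-,u_-)$ for $x<0$, $(\alpha_+,u_+)$ for $x>0$. Let $u_l(t)=u_a+(u_--u_a)e^{-\mu t}$, $u_r(t)=u_a+(u_+-u_a)e^{-\mu t}$, $\sigma(t)=u_a+\big(\frac{u_-+u_+}{2}-u_a\big)e^{-\mu t}$, $\xi(t)=u_at+\frac{u_-+u_+-2u_a}{2\mu}(1-e^{-\mu t})$, and $\omega(t)=\frac{(\alpha_++\alpha_-)(u_--u_+)}{2\mu}(1-e^{-\mu t})$. Then $\alpha=\alpha^0+\omega(t)\delta(x-\xi(t))$, $u=u^0$ with $(\alpha^0,u^0)(x,t)=(\alpha_-,u_l(t))$ for $x<\xi(t)$ and $(\alpha_+,u_r(t))$ for $x>\xi(t)$ is a $\delta$-shock solution of $\partial_t\alpha+\partial_x(\alpha u)=0$, $\partial_tu+\partial_x(\tfrac12u^2)=\mu(u_a-u)$ with these data and $\omega_0=0$, i.e. a weak solution satisfying Lax's entropy condition $u_r(t)<\sigma(t)<u_l(t)$ for all $t\ge0$.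
   Context: For $\psi\in\mathcal{C}_0^\infty(\mathbb{R}\times[0,\infty))$: $\langle\alpha,\psi\rangle=\int_0^\infty\int_{\mathbb{R}}\alpha^0\psi\,dx\,dt+\int_0^\infty\omega(t)\psi(\xi(t),t)dt$, $\langle\alpha u,\psi\rangle=\int_0^\infty\int_{\mathbb{R}}\alpha^0u^0\psi\,dx\,dt+\int_0^\infty\omega(t)\xi'(t)\psi(\xi(t),t)dt$. A weak solution with data $(\alpha_0,u_0)$ and initial weight $\omega_0$ means: for all such $\psi$, $\langle\alpha,\psi_t\rangle+\langle\alpha u,\psi_x\rangle=-\int\alpha_0\psi(x,0)dx-\omega_0\psi(\xi(0),0)$ and $\int_0^\infty\int\big(u\psi_t+\tfrac{u^2}{2}\psi_x+\mu(u_a-u)\psi\big)dx\,dt=-\int u_0\psi(x,0)dx$. *)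

theory Defs
  imports "HOL-Analysis.Analysis"
begin

text \<open>Test functions psi in C_0^infinity(R x [0,infinity)), written psi x t.
  Smoothness: a family D i j (playing the role of the partial derivative
  d_x^i d_t^j psi) of continuous functions with D 0 0 = psi, such that
  D (i+1) j is the x-derivative and D i (j+1) the t-derivative of D i j.
  Support: bounded subset of R x [0,infinity), i.e. psi vanishes for |x| > R or t > R.\<close>

definition test_fun :: "(real \<Rightarrow> real \<Rightarrow> real) \<Rightarrow> bool" where
  "test_fun \<psi> \<longleftrightarrow>
     (\<exists>D :: nat \<Rightarrow> nat \<Rightarrow> real \<Rightarrow> real \<Rightarrow> real.
        D 0 0 = \<psi> \<and>
        (\<forall>i j. continuous_on UNIV (\<lambda>(x, t). D i j x t) \<and>
           (\<forall>x t. ((\<lambda>y. D i j y t) has_real_derivative D (Suc i) j x t) (at x) \<and>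
                  ((\<lambda>s. D i j x s) has_real_derivative D i (Suc j) x t) (at t)))) \<and>
     (\<exists>R. \<forall>x t. R < \<bar>x\<bar> \<or> R < t \<longrightarrow> \<psi> x t = 0)"

definition dx :: "(real \<Rightarrow> real \<Rightarrow> real) \<Rightarrow> real \<Rightarrow> real \<Rightarrow> real" where
  "dx \<psi> x t = deriv (\<lambda>y. \<psi> y t) x"

definition dt :: "(real \<Rightarrow> real \<Rightarrow> real) \<Rightarrow> real \<Rightarrow> real \<Rightarrow> real" where
  "dt \<psi> x t = deriv (\<lambda>s. \<psi> x s) t"

text \<open>Weak solution of  alpha_t + (alpha u)_x = 0,  u_t + (u^2/2)_x = mu (ua - u)
  with alpha = alpha0s + omega(t) delta(x - xi(t)), u = us, data (alpha0, u0) and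
  initial weight omega0.\<close>

definition weak_solution ::
  "real \<Rightarrow> real \<Rightarrow> (real \<Rightarrow> real \<Rightarrow> real) \<Rightarrow> (real \<Rightarrow> real \<Rightarrow> real) \<Rightarrow>
   (real \<Rightarrow> real) \<Rightarrow> (real \<Rightarrow> real) \<Rightarrow>
   (real \<Rightarrow> real) \<Rightarrow> (real \<Rightarrow> real) \<Rightarrow> real \<Rightarrow> bool" where
  "weak_solution \<mu> ua \<alpha>s us \<omega> \<xi> \<alpha>0 u0 \<omega>0 \<longleftrightarrow>
    (\<forall>\<psi>. test_fun \<psi> \<longrightarrow>
       ((LINT t:{0..}|lborel. LINT x|lborel. \<alpha>s x t * dt \<psi> x t)
          + (LINT t:{0..}|lborel. \<omega> t * dt \<psi> (\<xi> t) t))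
       + ((LINT t:{0..}|lborel. LINT x|lborel. \<alpha>s x t * us x t * dx \<psi> x t)
          + (LINT t:{0..}|lborel. \<omega> t * deriv \<xi> t * dx \<psi> (\<xi> t) t))
       = - (LINT x|lborel. \<alpha>0 x * \<psi> x 0) - \<omega>0 * \<psi> (\<xi> 0) 0
     \<and>
       (LINT t:{0..}|lborel. LINT x|lborel.
          us x t * dt \<psi> x t + (us x t)\<^sup>2 / 2 * dx \<psi> x t + \<mu> * (ua - us x t) * \<psi> x t)
       = - (LINT x|lborel. u0 x * \<psi> x 0))"

end

theory Submission
  imports Defs
begin

lemma frechet:
  fixes F Fx Fy :: "real \<Rightarrow> real \<Rightarrow> real"
  assumes dx: "\<And>x t. ((\<lambda>y. F y t) has_real_derivative Fx x t) (at x)"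
      and dy: "\<And>x t. ((\<lambda>s. F x s) has_real_derivative Fy x t) (at t)"
      and cy: "continuous_on UNIV (\<lambda>(x,t). Fy x t)"
  shows "((\<lambda>(x,t). F x t) has_derivative (\<lambda>(h,k). Fx x t * h + Fy x t * k)) (at (x,t))"
proof -
  have "((\<lambda>(x,t). F x t) has_derivative (\<lambda>(h,k). Fx x t * h + blinfun_mult_right (Fy x t) k)) (at (x,t) within UNIV \<times> UNIV)"
  proof (rule has_derivative_partialsI)
    show "((\<lambda>x. F x t) has_derivative (\<lambda>h. Fx x t * h)) (at x within UNIV)"
      using dx[where x=x and t=t] by (simp add: has_field_derivative_def)
    show "((\<lambda>y. F x y) has_derivative blinfun_apply (blinfun_mult_right (Fy x y))) (at y within UNIV)" for x y
      using dy[where x=x and t=y] by (simp add: has_field_derivative_def)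
    show "continuous (at (x, t) within UNIV \<times> UNIV) (\<lambda>(x, y). blinfun_mult_right (Fy x y))"
    proof -
      have "isCont (\<lambda>p. Fy (fst p) (snd p)) (x,t)"
        using cy by (simp add: continuous_on_eq_continuous_at split_beta)
      then have "isCont (\<lambda>p. blinfun_mult_right (Fy (fst p) (snd p))) (x,t)"
        by (auto intro!: continuous_intros)
      moreover have "(\<lambda>(x, y). blinfun_mult_right (Fy x y)) = (\<lambda>p. blinfun_mult_right (Fy (fst p) (snd p)))"
        by (simp add: fun_eq_iff split_beta)
      ultimately show ?thesis by simp
    qed
  qed auto
  then show ?thesis by simp
qed

lemma chain:
  fixes F Fx Fy :: "real \<Rightarrow> real \<Rightarrow> real"
  assumes dx: "\<And>x t. ((\<lambda>y. F y t) has_real_derivative Fx x t) (at x)"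
      and dy: "\<And>x t. ((\<lambda>s. F x s) has_real_derivative Fy x t) (at t)"
      and cy: "continuous_on UNIV (\<lambda>(x,t). Fy x t)"
      and dxi: "(\<xi> has_real_derivative \<xi>' ) (at t)"
  shows "((\<lambda>s. F (\<xi> s + y) s) has_real_derivative (Fx (\<xi> t + y) t * \<xi>' + Fy (\<xi> t + y) t)) (at t)"
proof -
  have g: "((\<lambda>s. (\<xi> s + y, s)) has_derivative (\<lambda>h. (\<xi>' * h, h))) (at t)"
    using dxi by (auto simp: has_field_derivative_def intro!: derivative_eq_intros)
  have "((\<lambda>(x,t). F x t) \<circ> (\<lambda>s. (\<xi> s + y, s)) has_derivative
     (\<lambda>(h,k). Fx (\<xi> t + y) t * h + Fy (\<xi> t + y) t * k) \<circ> (\<lambda>h. (\<xi>' * h, h))) (at t)"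
    by (rule diff_chain_at[OF g frechet[OF dx dy cy]])
  then have "((\<lambda>s. F (\<xi> s + y) s) has_derivative (\<lambda>h. Fx (\<xi> t + y) t * (\<xi>' * h) + Fy (\<xi> t + y) t * h)) (at t)"
    by (simp add: o_def)
  then show ?thesis
    unfolding has_field_derivative_def
    by (rule has_derivative_eq_rhs) (simp add: fun_eq_iff algebra_simps)
qed

lemma contcomp:
  fixes G :: "real \<Rightarrow> real \<Rightarrow> real"
  assumes cG: "continuous_on UNIV (\<lambda>(x,t). G x t)" and cxi: "continuous_on UNIV \<xi>"
  shows "continuous_on S (\<lambda>(s,y). G (\<xi> s + y) s)"
proof -
  have i: "continuous_on UNIV (\<lambda>p::real\<times>real. (\<xi> (fst p) + snd p, fst p))"
    by (intro continuous_intros continuous_on_compose2[OF cxi]) auto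
  have "continuous_on UNIV ((\<lambda>(x,t). G x t) \<circ> (\<lambda>p::real\<times>real. (\<xi> (fst p) + snd p, fst p)))"
    by (rule continuous_on_compose[OF i]) (rule continuous_on_subset[OF cG], simp)
  then have "continuous_on UNIV (\<lambda>(s,y). G (\<xi> s + y) s)"
    by (simp add: o_def split_beta)
  then show ?thesis by (rule continuous_on_subset) simp
qed

lemma leib:
  fixes F Fx Fy :: "real \<Rightarrow> real \<Rightarrow> real"
  assumes dx: "\<And>x t. ((\<lambda>y. F y t) has_real_derivative Fx x t) (at x)"
      and dy: "\<And>x t. ((\<lambda>s. F x s) has_real_derivative Fy x t) (at t)"
      and cF: "continuous_on UNIV (\<lambda>(x,t). F x t)"
      and cx: "continuous_on UNIV (\<lambda>(x,t). Fx x t)"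
      and cy: "continuous_on UNIV (\<lambda>(x,t). Fy x t)"
      and dxi: "\<And>t. (\<xi> has_real_derivative \<xi>' t) (at t)"
      and cxi': "continuous_on UNIV \<xi>'"
  shows "((\<lambda>s. integral {a..b} (\<lambda>y. F (\<xi> s + y) s)) has_real_derivative
           integral {a..b} (\<lambda>y. Fx (\<xi> t + y) t * \<xi>' t + Fy (\<xi> t + y) t)) (at t)"
proof -
  have cxi: "continuous_on UNIV \<xi>"
    using dxi by (meson DERIV_isCont continuous_at_imp_continuous_on)
  have "((\<lambda>s. integral (cbox a b) (\<lambda>y. F (\<xi> s + y) s)) has_real_derivative
           integral (cbox a b) (\<lambda>y. Fx (\<xi> t + y) t * \<xi>' t + Fy (\<xi> t + y) t)) (at t within UNIV)"
  proof (rule leibniz_rule_field_derivative[where f="\<lambda>s y. F (\<xi> s + y) s"])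
    show "((\<lambda>s. F (\<xi> s + y) s) has_real_derivative Fx (\<xi> s + y) s * \<xi>' s + Fy (\<xi> s + y) s) (at s within UNIV)" for s y
      using chain[OF dx dy cy dxi] by simp
    show "(\<lambda>y. F (\<xi> s + y) s) integrable_on cbox a b" for s
    proof -
      have "continuous_on UNIV (\<lambda>(s,y). F (\<xi> s + y) s)" by (rule contcomp[OF cF cxi])
      then have "continuous_on (cbox a b) ((\<lambda>(s,y). F (\<xi> s + y) s) \<circ> (\<lambda>y. (s,y)))"
        by (intro continuous_on_compose) (auto intro!: continuous_intros elim: continuous_on_subset)
      then have "continuous_on (cbox a b) (\<lambda>y. F (\<xi> s + y) s)" by (simp add: o_def)
      then show ?thesis by (rule integrable_continuous)
    qed
    show "continuous_on (UNIV \<times> cbox a b) (\<lambda>(s, y). Fx (\<xi> s + y) s * \<xi>' s + Fy (\<xi> s + y) s)"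
    proof -
      have 1: "continuous_on (UNIV \<times> cbox a b) (\<lambda>(s, y). Fx (\<xi> s + y) s)" by (rule contcomp[OF cx cxi])
      have 2: "continuous_on (UNIV \<times> cbox a b) (\<lambda>(s, y). Fy (\<xi> s + y) s)" by (rule contcomp[OF cy cxi])
      have 3: "continuous_on (UNIV \<times> cbox a b) (\<lambda>p::real\<times>real. \<xi>' (fst p))"
        by (rule continuous_on_compose2[OF cxi']) (auto intro!: continuous_intros)
      show ?thesis using continuous_on_add[OF continuous_on_mult[OF 1 3] 2] by (simp add: split_beta)
    qed
  qed auto
  then show ?thesis by simp
qed

lemma lemX:
  fixes f g h :: "real \<Rightarrow> real"
  assumes cf: "continuous_on UNIV f" and cg: "continuous_on UNIV g"
  and vf: "\<And>x. R < \<bar>x\<bar> \<Longrightarrow> f x = 0" and vg: "\<And>x. R < \<bar>x\<bar> \<Longrightarrow> g x = 0"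
  and hdef: "\<And>x. h x = (if x < c then f x else g x)"
  and B: "R + \<bar>c\<bar> < B"
  shows "integral\<^sup>L lborel h = integral {-B..0} (\<lambda>y. f (c+y)) + integral {0..B} (\<lambda>y. g (c+y))"
proof -
  have cf': "continuous_on S (\<lambda>y. f (c+y))" for S
    by (rule continuous_on_compose2[OF cf]) (auto intro!: continuous_intros)
  have cg': "continuous_on S (\<lambda>y. g (c+y))" for S
    by (rule continuous_on_compose2[OF cg]) (auto intro!: continuous_intros)
  have i1: "set_integrable lborel {-B..<0} (\<lambda>y. f (c+y))"
    by (rule set_integrable_subset[OF borel_integrable_atLeastAtMost'[OF cf', of "-B" 0]]) auto
  have i2: "set_integrable lborel {0..B} (\<lambda>y. g (c+y))"
    by (rule borel_integrable_atLeastAtMost'[OF cg'])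
  have "integral\<^sup>L lborel h = integral\<^sup>L lborel (\<lambda>y. h (c + y))"
    using lborel_integral_real_affine[of 1 h c] by simp
  also have "(\<lambda>y. h (c+y)) = (\<lambda>y. indicator {-B..<0} y *\<^sub>R f (c+y) + indicator {0..B} y *\<^sub>R g (c+y))"
  proof
    fix y
    show "h (c+y) = indicator {-B..<0} y *\<^sub>R f (c+y) + indicator {0..B} y *\<^sub>R g (c+y)"
    proof (cases "y < 0")
      case True
      show ?thesis
      proof (cases "y < -B")
        case True
        then have "R < \<bar>c+y\<bar>" using B by linarith
        then show ?thesis using True \<open>y<0\<close> by (simp add: hdef vf indicator_def)
      qed (use True in \<open>simp add: hdef indicator_def\<close>)
    next
      case False
      show ?thesis
      proof (cases "y > B")
        case True
        then have "R < \<bar>c+y\<bar>" using B by linarith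
        then show ?thesis using True False by (simp add: hdef vg indicator_def)
      qed (use False in \<open>simp add: hdef indicator_def\<close>)
    qed
  qed
  also have "integral\<^sup>L lborel (\<lambda>y. indicator {-B..<0} y *\<^sub>R f (c+y) + indicator {0..B} y *\<^sub>R g (c+y))
     = (LINT y:{-B..<0}|lborel. f (c+y)) + (LINT y:{0..B}|lborel. g (c+y))"
    using i1 i2 unfolding set_integrable_def set_lebesgue_integral_def by (rule Bochner_Integration.integral_add)
  also have "\<dots> = integral {-B..<0} (\<lambda>y. f (c+y)) + integral {0..B} (\<lambda>y. g (c+y))"
    using set_borel_integral_eq_integral(2)[OF i1] set_borel_integral_eq_integral(2)[OF i2] by simp
  also have "integral {-B..<0} (\<lambda>y. f (c+y)) = integral {-B..0} (\<lambda>y. f (c+y))"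
  proof (rule integral_spike_set)
    have "{x \<in> {-B..<0} - {-B..0}. f (c + x) \<noteq> 0} = {}" by auto
    then show "negligible {x \<in> {-B..<0} - {-B..0}. f (c + x) \<noteq> 0}" by (simp only: negligible_empty)
    have "{x \<in> {-B..0} - {-B..<0}. f (c + x) \<noteq> 0} \<subseteq> {0}" by auto
    then show "negligible {x \<in> {-B..0} - {-B..<0}. f (c + x) \<noteq> 0}"
      by (rule negligible_subset[rotated]) simp
  qed
  finally show ?thesis .
qed

lemma vanish_deriv:
  fixes f :: "real \<Rightarrow> real"
  assumes "(f has_real_derivative f') (at x)" "open S" "x \<in> S" "\<And>y. y \<in> S \<Longrightarrow> f y = 0"
  shows "f' = 0"
proof -
  have "((\<lambda>_. 0) has_real_derivative f') (at x)"
    using has_field_derivative_transform_within_open[OF assms(1-3), of "\<lambda>_. 0"] assms(4) by simp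
  then show ?thesis using DERIV_const DERIV_unique by blast
qed

lemma contx:
  fixes G :: "real \<Rightarrow> real \<Rightarrow> real"
  assumes "continuous_on UNIV (\<lambda>(x,t). G x t)"
  shows "continuous_on S (\<lambda>x. G x t)"
proof -
  have "continuous_on S ((\<lambda>(x,t). G x t) \<circ> (\<lambda>x. (x,t)))"
    by (intro continuous_on_compose) (auto intro!: continuous_intros continuous_on_subset[OF assms])
  then show ?thesis by (simp add: o_def)
qed

lemma contdiag:
  fixes G :: "real \<Rightarrow> real \<Rightarrow> real"
  assumes "continuous_on UNIV (\<lambda>(x,t). G x t)" "continuous_on UNIV \<xi>"
  shows "continuous_on S (\<lambda>t. G (\<xi> t) t)"
proof -
  have "continuous_on S ((\<lambda>(x,t). G x t) \<circ> (\<lambda>t. (\<xi> t,t)))"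
    by (intro continuous_on_compose) (auto intro!: continuous_intros continuous_on_subset[OF assms(1)] continuous_on_subset[OF assms(2)])
  then show ?thesis by (simp add: o_def)
qed

lemma setint:
  fixes h :: "real \<Rightarrow> real"
  assumes c: "continuous_on {0..b} h" and z: "\<And>t. R < t \<Longrightarrow> h t = 0" and Rb: "R < b"
  shows "set_integrable lborel {0..} h" "(LINT t:{0..}|lborel. h t) = integral {0..b} h"
proof -
  have eq: "(\<lambda>t. indicator {0..} t *\<^sub>R h t) = (\<lambda>t. indicator {0..b} t *\<^sub>R h t)"
  proof
    fix t show "indicator {0..} t *\<^sub>R h t = indicator {0..b} t *\<^sub>R h t"
      using z[of t] Rb by (cases "t \<le> b") (auto simp: indicator_def)
  qed
  have i: "set_integrable lborel {0..b} h" by (rule borel_integrable_atLeastAtMost'[OF c])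
  then show "set_integrable lborel {0..} h" unfolding set_integrable_def eq .
  have "(LINT t:{0..}|lborel. h t) = (LINT t:{0..b}|lborel. h t)"
    unfolding set_lebesgue_integral_def eq ..
  also have "\<dots> = integral {0..b} h" by (rule set_borel_integral_eq_integral(2)[OF i])
  finally show "(LINT t:{0..}|lborel. h t) = integral {0..b} h" .
qed

theorem mainTheorem7:
  fixes \<mu> ua am ap um up :: real
    and ul ur \<sigma> \<xi> \<omega> :: "real \<Rightarrow> real"
    and \<alpha>0 u0 :: "real \<Rightarrow> real"
    and \<alpha>s us :: "real \<Rightarrow> real \<Rightarrow> real"
  assumes "\<mu> > 0" and "am \<ge> 0" and "ap \<ge> 0" and "um > up"
    and "\<alpha>0 = (\<lambda>x. if x < 0 then am else ap)"
    and "u0 = (\<lambda>x. if x < 0 then um else up)"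
    and "ul = (\<lambda>t. ua + (um - ua) * exp (- \<mu> * t))"
    and "ur = (\<lambda>t. ua + (up - ua) * exp (- \<mu> * t))"
    and "\<sigma> = (\<lambda>t. ua + ((um + up) / 2 - ua) * exp (- \<mu> * t))"
    and "\<xi> = (\<lambda>t. ua * t + (um + up - 2 * ua) / (2 * \<mu>) * (1 - exp (- \<mu> * t)))"
    and "\<omega> = (\<lambda>t. (ap + am) * (um - up) / (2 * \<mu>) * (1 - exp (- \<mu> * t)))"
    and "\<alpha>s = (\<lambda>x t. if x < \<xi> t then am else ap)"
    and "us = (\<lambda>x t. if x < \<xi> t then ul t else ur t)"
  shows "weak_solution \<mu> ua \<alpha>s us \<omega> \<xi> \<alpha>0 u0 0
         \<and> (\<forall>t\<ge>0. ur t < \<sigma> t \<and> \<sigma> t < ul t)"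
proof -
  note mu = assms(1) and umup = assms(4)
  note a0 = assms(5) and u0d = assms(6) and uld = assms(7) and urd = assms(8) and sgd = assms(9)
    and xid = assms(10) and omd = assms(11) and asd = assms(12) and usd = assms(13)
  have sg_avg: "\<sigma> t = (ul t + ur t) / 2" for t
    unfolding sgd uld urd by (simp add: field_simps)
  have entropy: "ur t < \<sigma> t \<and> \<sigma> t < ul t" for t
  proof -
    have "0 < exp (- \<mu> * t)" by simp
    then have "up * exp (- \<mu> * t) < um * exp (- \<mu> * t)" using umup by simp
    then show ?thesis unfolding sgd uld urd by (simp add: field_simps)
  qed
  have dxi: "(\<xi> has_real_derivative \<sigma> t) (at t)" for t
    unfolding xid sgd using mu
    by (auto intro!: derivative_eq_intros simp: field_simps)
  have dom: "(\<omega> has_real_derivative (am * (ul t - \<sigma> t) + ap * (\<sigma> t - ur t))) (at t)" for t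
    unfolding omd sgd uld urd using mu
    by (auto intro!: derivative_eq_intros simp: field_simps)
  have dul: "(ul has_real_derivative \<mu> * (ua - ul t)) (at t)" for t
    unfolding uld using mu
    by (auto intro!: derivative_eq_intros simp: field_simps)
  have dur: "(ur has_real_derivative \<mu> * (ua - ur t)) (at t)" for t
    unfolding urd using mu
    by (auto intro!: derivative_eq_intros simp: field_simps)
  have xi0: "\<xi> 0 = 0" unfolding xid by simp
  have om0: "\<omega> 0 = 0" unfolding omd by simp
  have csg: "continuous_on UNIV \<sigma>" unfolding sgd by (intro continuous_intros)
  have cxi: "continuous_on UNIV \<xi>" unfolding xid by (intro continuous_intros)
  have com: "continuous_on UNIV \<omega>" unfolding omd by (intro continuous_intros)
  have cul: "continuous_on UNIV ul" unfolding uld by (intro continuous_intros)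
  have cur: "continuous_on UNIV ur" unfolding urd by (intro continuous_intros)
  have "weak_solution \<mu> ua \<alpha>s us \<omega> \<xi> \<alpha>0 u0 0"
    unfolding weak_solution_def
  proof (intro allI impI, goal_cases)
    case (1 \<psi>)
    then obtain D R0 where D00: "D 0 0 = \<psi>"
      and Dc: "\<And>i j. continuous_on UNIV (\<lambda>(x,t). D i j x t)"
      and Dx: "\<And>i j x t. ((\<lambda>y. D i j y t) has_real_derivative D (Suc i) j x t) (at x)"
      and Dt: "\<And>i j x t. ((\<lambda>s. D i j x s) has_real_derivative D i (Suc j) x t) (at t)"
      and supp0: "\<And>x t. R0 < \<bar>x\<bar> \<or> R0 < t \<Longrightarrow> \<psi> x t = 0"
      unfolding test_fun_def by metis
    define R where "R = \<bar>R0\<bar> + 1"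
    have Rpos: "0 < R" unfolding R_def by simp
    have supp: "D 0 0 x t = 0" if "R < \<bar>x\<bar> \<or> R < t" for x t
    proof -
      have "R0 < \<bar>x\<bar> \<or> R0 < t" using that unfolding R_def by linarith
      then show ?thesis using supp0[of x t] D00 by simp
    qed
    have psi: "\<psi> = D 0 0" using D00 by simp
    have dtD: "dt (D 0 0) x t = D 0 1 x t" for x t
      unfolding dt_def using DERIV_imp_deriv[OF Dt[where i=0 and j=0 and x=x and t=t]] by simp
    have dxD: "dx (D 0 0) x t = D 1 0 x t" for x t
      unfolding dx_def using DERIV_imp_deriv[OF Dx[where i=0 and j=0 and x=x and t=t]] by simp
    have V10: "D 1 0 x t = 0" if "R < \<bar>x\<bar> \<or> R < t" for x t
    proof (cases "R < t")
      case True
      have "D (Suc 0) 0 x t = 0" by (rule vanish_deriv[OF Dx[where i=0 and j=0 and x=x and t=t], of UNIV]) (use supp True in auto)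
      then show ?thesis by simp
    next
      case False
      then have x: "R < \<bar>x\<bar>" using that by simp
      have o: "open {y::real. R < \<bar>y\<bar>}" by (intro open_Collect_less continuous_intros)
      have "D (Suc 0) 0 x t = 0" by (rule vanish_deriv[OF Dx[where i=0 and j=0 and x=x and t=t] o]) (use supp x in auto)
      then show ?thesis by simp
    qed
    have V01: "D 0 1 x t = 0" if "R < \<bar>x\<bar> \<or> R < t" for x t
    proof (cases "R < \<bar>x\<bar>")
      case True
      have "D 0 (Suc 0) x t = 0" by (rule vanish_deriv[OF Dt[where i=0 and j=0 and x=x and t=t], of UNIV]) (use supp True in auto)
      then show ?thesis by simp
    next
      case False
      then have x: "R < t" using that by simp
      have o: "open {s::real. R < s}" by (intro open_Collect_less continuous_intros)
      have "D 0 (Suc 0) x t = 0" by (rule vanish_deriv[OF Dt[where i=0 and j=0 and x=x and t=t] o]) (use supp x in auto)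
      then show ?thesis by simp
    qed
    have V01s: "D 0 (Suc 0) x t = 0" if "R < \<bar>x\<bar> \<or> R < t" for x t using V01[OF that] by simp
    have V10s: "D (Suc 0) 0 x t = 0" if "R < \<bar>x\<bar> \<or> R < t" for x t using V10[OF that] by simp
    define b where "b = R + 1"
    have Rb: "R < b" "0 \<le> b" unfolding b_def using Rpos by auto
    have "bounded (\<xi> ` {0..b})"
      by (intro compact_imp_bounded compact_continuous_image continuous_on_subset[OF cxi]) auto
    then obtain C where C: "\<And>t. t \<in> {0..b} \<Longrightarrow> \<bar>\<xi> t\<bar> \<le> C"
      unfolding bounded_iff by (metis atLeastAtMost_iff image_eqI real_norm_def)
    define B where "B = R + \<bar>C\<bar> + 1"
    have RB: "R + \<bar>\<xi> t\<bar> < B" if "t \<in> {0..b}" for t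
      using C[OF that] unfolding B_def by linarith
    have Bpos: "0 \<le> B" unfolding B_def using Rpos by simp
    define IL where "IL i j t = integral {-B..0} (\<lambda>y. D i j (\<xi> t + y) t)" for i j t
    define IR where "IR i j t = integral {0..B} (\<lambda>y. D i j (\<xi> t + y) t)" for i j t
    have cD1: "continuous_on S (\<lambda>y. D i j (c + y) t)" for S i j c t
      by (rule continuous_on_compose2[OF contx[OF Dc]]) (auto intro!: continuous_intros)
    have intD: "(\<lambda>y. D i j (c + y) t) integrable_on {a1..a2}" for i j c t a1 a2
      by (rule integrable_continuous_interval[OF cD1])
    have dI: "((\<lambda>s. integral {a1..a2} (\<lambda>y. D i j (\<xi> s + y) s)) has_real_derivative
        \<sigma> t * integral {a1..a2} (\<lambda>y. D (Suc i) j (\<xi> t + y) t) + integral {a1..a2} (\<lambda>y. D i (Suc j) (\<xi> t + y) t)) (at t)"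
      for a1 a2 i j t
    proof -
      have "integral {a1..a2} (\<lambda>y. D (Suc i) j (\<xi> t + y) t * \<sigma> t + D i (Suc j) (\<xi> t + y) t)
         = \<sigma> t * integral {a1..a2} (\<lambda>y. D (Suc i) j (\<xi> t + y) t) + integral {a1..a2} (\<lambda>y. D i (Suc j) (\<xi> t + y) t)"
        by (subst integral_add) (auto intro!: integrable_continuous_interval continuous_intros cD1 simp: mult.commute)
      then show ?thesis using leib[OF Dx Dt Dc Dc Dc dxi csg, of a1 a2 i j t] by simp
    qed
    have dIL: "(IL i j has_real_derivative \<sigma> t * IL (Suc i) j t + IL i (Suc j) t) (at t)" for i j t
      unfolding IL_def using dI by simp
    have dIR: "(IR i j has_real_derivative \<sigma> t * IR (Suc i) j t + IR i (Suc j) t) (at t)" for i j t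
      unfolding IR_def using dI by simp
    have cIL: "continuous_on S (IL i j)" for S i j
      using dIL by (meson DERIV_isCont continuous_at_imp_continuous_on)
    have cIR: "continuous_on S (IR i j)" for S i j
      using dIR by (meson DERIV_isCont continuous_at_imp_continuous_on)
    have FL: "IL 1 0 t = D 0 0 (\<xi> t) t" if t: "t \<in> {0..b}" for t
    proof -
      have "((\<lambda>y. D (Suc 0) 0 (\<xi> t + y) t) has_integral (D 0 0 (\<xi> t + 0) t - D 0 0 (\<xi> t + -B) t)) {-B..0}"
      proof (rule fundamental_theorem_of_calculus)
        show "- B \<le> 0" using Bpos by simp
        fix y :: real
        have "((\<lambda>y. D 0 0 (\<xi> t + y) t) has_real_derivative D (Suc 0) 0 (\<xi> t + y) t * 1) (at y)"
          by (rule DERIV_chain2[OF Dx]) (auto intro!: derivative_eq_intros)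
        then show "((\<lambda>y. D 0 0 (\<xi> t + y) t) has_vector_derivative D (Suc 0) 0 (\<xi> t + y) t) (at y within {- B..0})"
          by (simp add: has_real_derivative_iff_has_vector_derivative has_vector_derivative_at_within)
      qed
      moreover have "D 0 0 (\<xi> t + -B) t = 0" using RB[OF t] by (intro supp) linarith
      ultimately show ?thesis unfolding IL_def by (simp add: integral_unique)
    qed
    have FR: "IR 1 0 t = - D 0 0 (\<xi> t) t" if t: "t \<in> {0..b}" for t
    proof -
      have "((\<lambda>y. D (Suc 0) 0 (\<xi> t + y) t) has_integral (D 0 0 (\<xi> t + B) t - D 0 0 (\<xi> t + 0) t)) {0..B}"
      proof (rule fundamental_theorem_of_calculus)
        show "0 \<le> B" using Bpos by simp
        fix y :: real
        have "((\<lambda>y. D 0 0 (\<xi> t + y) t) has_real_derivative D (Suc 0) 0 (\<xi> t + y) t * 1) (at y)"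
          by (rule DERIV_chain2[OF Dx]) (auto intro!: derivative_eq_intros)
        then show "((\<lambda>y. D 0 0 (\<xi> t + y) t) has_vector_derivative D (Suc 0) 0 (\<xi> t + y) t) (at y within {0..B})"
          by (simp add: has_real_derivative_iff_has_vector_derivative has_vector_derivative_at_within)
      qed
      moreover have "D 0 0 (\<xi> t + B) t = 0" using RB[OF t] by (intro supp) linarith
      ultimately show ?thesis unfolding IR_def by (simp add: integral_unique)
    qed
    have Z: "IL 0 0 t = 0" "IR 0 0 t = 0" "D 0 0 (\<xi> t) t = 0" if "R < t" for t
      unfolding IL_def IR_def using supp that by simp_all
    have cDx: "continuous_on UNIV (\<lambda>x. D i j x t)" for i j t by (rule contx[OF Dc])
    have E1: "(LINT x|lborel. \<alpha>s x t * dt (D 0 0) x t) = am * IL 0 1 t + ap * IR 0 1 t" if t: "t \<in> {0..b}" for t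
    proof -
      have "(LINT x|lborel. \<alpha>s x t * dt (D 0 0) x t) = integral {-B..0} (\<lambda>y. am * D 0 1 (\<xi> t + y) t) + integral {0..B} (\<lambda>y. ap * D 0 1 (\<xi> t + y) t)"
        by (rule lemX[where R=R and f="\<lambda>x. am * D 0 1 x t" and g="\<lambda>x. ap * D 0 1 x t" and c="\<xi> t"])
          (auto simp: asd dtD V01 V01s intro!: continuous_intros cDx RB[OF t])
      then show ?thesis unfolding IL_def IR_def by simp
    qed
    have E2: "(LINT x|lborel. \<alpha>s x t * us x t * dx (D 0 0) x t) = am * ul t * IL 1 0 t + ap * ur t * IR 1 0 t" if t: "t \<in> {0..b}" for t
    proof -
      have "(LINT x|lborel. \<alpha>s x t * us x t * dx (D 0 0) x t) = integral {-B..0} (\<lambda>y. am * ul t * D 1 0 (\<xi> t + y) t) + integral {0..B} (\<lambda>y. ap * ur t * D 1 0 (\<xi> t + y) t)"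
        by (rule lemX[where R=R and f="\<lambda>x. am * ul t * D 1 0 x t" and g="\<lambda>x. ap * ur t * D 1 0 x t" and c="\<xi> t"])
          (auto simp: asd usd dxD V10 V10s intro!: continuous_intros cDx RB[OF t])
      then show ?thesis unfolding IL_def IR_def by simp
    qed
    have lin3: "integral {a1..a2} (\<lambda>y. p * D 0 1 (c + y) t + q * D 1 0 (c + y) t + r * D 0 0 (c+y) t)
       = p * integral {a1..a2} (\<lambda>y. D 0 1 (c+y) t) + q * integral {a1..a2} (\<lambda>y. D 1 0 (c+y) t) + r * integral {a1..a2} (\<lambda>y. D 0 0 (c+y) t)"
      for a1 a2 p q r c t
      by (subst integral_add, (auto intro!: integrable_continuous_interval continuous_intros cD1)[2])+ simp
    have E3: "(LINT x|lborel. us x t * dt (D 0 0) x t + (us x t)\<^sup>2 / 2 * dx (D 0 0) x t + \<mu> * (ua - us x t) * D 0 0 x t)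
       = ul t * IL 0 1 t + (ul t)\<^sup>2 / 2 * IL 1 0 t + \<mu> * (ua - ul t) * IL 0 0 t
       + (ur t * IR 0 1 t + (ur t)\<^sup>2 / 2 * IR 1 0 t + \<mu> * (ua - ur t) * IR 0 0 t)" if t: "t \<in> {0..b}" for t
    proof -
      have "(LINT x|lborel. us x t * dt (D 0 0) x t + (us x t)\<^sup>2 / 2 * dx (D 0 0) x t + \<mu> * (ua - us x t) * D 0 0 x t)
        = integral {-B..0} (\<lambda>y. ul t * D 0 1 (\<xi> t + y) t + (ul t)\<^sup>2 / 2 * D 1 0 (\<xi> t + y) t + \<mu> * (ua - ul t) * D 0 0 (\<xi> t + y) t)
        + integral {0..B} (\<lambda>y. ur t * D 0 1 (\<xi> t + y) t + (ur t)\<^sup>2 / 2 * D 1 0 (\<xi> t + y) t + \<mu> * (ua - ur t) * D 0 0 (\<xi> t + y) t)"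
        by (rule lemX[where R=R and f="\<lambda>x. ul t * D 0 1 x t + (ul t)\<^sup>2 / 2 * D 1 0 x t + \<mu> * (ua - ul t) * D 0 0 x t"
             and g="\<lambda>x. ur t * D 0 1 x t + (ur t)\<^sup>2 / 2 * D 1 0 x t + \<mu> * (ua - ur t) * D 0 0 x t" and c="\<xi> t"])
          (auto simp: usd dxD dtD V10 V01 V10s V01s supp intro!: continuous_intros cDx RB[OF t])
      then show ?thesis unfolding IL_def IR_def lin3 by simp
    qed
    have R0B: "R < B" using RB[of 0] Rb xi0 by simp
    have E0a: "(LINT x|lborel. \<alpha>0 x * D 0 0 x 0) = am * IL 0 0 0 + ap * IR 0 0 0"
    proof -
      have "(LINT x|lborel. \<alpha>0 x * D 0 0 x 0) = integral {-B..0} (\<lambda>y. am * D 0 0 (0 + y) 0) + integral {0..B} (\<lambda>y. ap * D 0 0 (0 + y) 0)"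
        by (rule lemX[where R=R and f="\<lambda>x. am * D 0 0 x 0" and g="\<lambda>x. ap * D 0 0 x 0" and c=0])
          (auto simp: a0 supp intro!: continuous_intros cDx simp: R0B)
      then show ?thesis unfolding IL_def IR_def by (simp add: xi0)
    qed
    have E0u: "(LINT x|lborel. u0 x * D 0 0 x 0) = ul 0 * IL 0 0 0 + ur 0 * IR 0 0 0"
    proof -
      have "(LINT x|lborel. u0 x * D 0 0 x 0) = integral {-B..0} (\<lambda>y. um * D 0 0 (0 + y) 0) + integral {0..B} (\<lambda>y. up * D 0 0 (0 + y) 0)"
        by (rule lemX[where R=R and f="\<lambda>x. um * D 0 0 x 0" and g="\<lambda>x. up * D 0 0 x 0" and c=0])
          (auto simp: u0d supp intro!: continuous_intros cDx simp: R0B)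
      then show ?thesis unfolding IL_def IR_def by (simp add: xi0 uld urd)
    qed
    have comS: "continuous_on S \<omega>" "continuous_on S \<sigma>" "continuous_on S ul" "continuous_on S ur" for S
      using continuous_on_subset[OF com] continuous_on_subset[OF csg] continuous_on_subset[OF cul] continuous_on_subset[OF cur] by auto
    have dsig: "deriv \<xi> t = \<sigma> t" for t by (rule DERIV_imp_deriv[OF dxi])
    have cdg: "continuous_on S (\<lambda>t. D i j (\<xi> t) t)" for S i j by (rule contdiag[OF Dc cxi])
    have dpsi: "((\<lambda>s. D 0 0 (\<xi> s) s) has_real_derivative D (Suc 0) 0 (\<xi> t) t * \<sigma> t + D 0 (Suc 0) (\<xi> t) t) (at t)" for t
      using chain[OF Dx[where i=0 and j=0] Dt[where i=0 and j=0] Dc dxi, where y=0] by simp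
    define A1 where "A1 = (\<lambda>t. LINT x|lborel. \<alpha>s x t * dt (D 0 0) x t)"
    define A2 where "A2 = (\<lambda>t. \<omega> t * dt (D 0 0) (\<xi> t) t)"
    define A3 where "A3 = (\<lambda>t. LINT x|lborel. \<alpha>s x t * us x t * dx (D 0 0) x t)"
    define A4 where "A4 = (\<lambda>t. \<omega> t * deriv \<xi> t * dx (D 0 0) (\<xi> t) t)"
    define A5 where "A5 = (\<lambda>t. LINT x|lborel. us x t * dt (D 0 0) x t + (us x t)\<^sup>2 / 2 * dx (D 0 0) x t + \<mu> * (ua - us x t) * D 0 0 x t)"
    have cA1: "continuous_on {0..b} A1"
      by (rule continuous_on_eq[of _ "\<lambda>t. am * IL 0 1 t + ap * IR 0 1 t"])
         (auto intro!: continuous_intros cIL cIR simp: A1_def E1)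
    have cA2: "continuous_on {0..b} A2"
      unfolding A2_def dtD by (intro continuous_intros cdg comS)
    have cA3: "continuous_on {0..b} A3"
      by (rule continuous_on_eq[of _ "\<lambda>t. am * ul t * IL 1 0 t + ap * ur t * IR 1 0 t"])
         (auto intro!: continuous_intros cIL cIR comS simp: A3_def E2)
    have cA4: "continuous_on {0..b} A4"
      unfolding A4_def dxD dsig by (intro continuous_intros cdg comS)
    have cA5: "continuous_on {0..b} A5"
    proof (rule continuous_on_eq[of _ "\<lambda>t. ul t * IL 0 1 t + (ul t)\<^sup>2 / 2 * IL 1 0 t + \<mu> * (ua - ul t) * IL 0 0 t
       + (ur t * IR 0 1 t + (ur t)\<^sup>2 / 2 * IR 1 0 t + \<mu> * (ua - ur t) * IR 0 0 t)"])
      show "continuous_on {0..b} (\<lambda>t. ul t * IL 0 1 t + (ul t)\<^sup>2 / 2 * IL 1 0 t + \<mu> * (ua - ul t) * IL 0 0 t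
       + (ur t * IR 0 1 t + (ur t)\<^sup>2 / 2 * IR 1 0 t + \<mu> * (ua - ur t) * IR 0 0 t))"
        by (intro continuous_intros cIL cIR comS) auto
      fix t assume "t \<in> {0..b}"
      then show "ul t * IL 0 1 t + (ul t)\<^sup>2 / 2 * IL 1 0 t + \<mu> * (ua - ul t) * IL 0 0 t
       + (ur t * IR 0 1 t + (ur t)\<^sup>2 / 2 * IR 1 0 t + \<mu> * (ua - ur t) * IR 0 0 t) = A5 t"
        unfolding A5_def by (rule E3[symmetric])
    qed
    have zA: "A1 t = 0" "A2 t = 0" "A3 t = 0" "A4 t = 0" "A5 t = 0" if "R < t" for t
      unfolding A1_def A2_def A3_def A4_def A5_def using that
      by (simp_all add: dtD dxD V01 V10 V01s V10s supp)
    note S1 = setint[OF cA1 zA(1) Rb(1)] and S2 = setint[OF cA2 zA(2) Rb(1)]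
      and S3 = setint[OF cA3 zA(3) Rb(1)] and S4 = setint[OF cA4 zA(4) Rb(1)]
      and S5 = setint[OF cA5 zA(5) Rb(1)]
    define Fa where "Fa = (\<lambda>s. am * IL 0 0 s + ap * IR 0 0 s + \<omega> s * D 0 0 (\<xi> s) s)"
    have dFa: "(Fa has_real_derivative A1 t + A2 t + A3 t + A4 t) (at t)" if t: "t \<in> {0..b}" for t
    proof -
      have "(Fa has_real_derivative am * (\<sigma> t * IL (Suc 0) 0 t + IL 0 (Suc 0) t) + ap * (\<sigma> t * IR (Suc 0) 0 t + IR 0 (Suc 0) t)
         + (\<omega> t * (D (Suc 0) 0 (\<xi> t) t * \<sigma> t + D 0 (Suc 0) (\<xi> t) t) + (am * (ul t - \<sigma> t) + ap * (\<sigma> t - ur t)) * D 0 0 (\<xi> t) t)) (at t)"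
        (is "(_ has_real_derivative ?d) _")
        unfolding Fa_def by (intro DERIV_add DERIV_cmult DERIV_mult' dIL dIR dom dpsi)
      moreover have "?d = A1 t + A2 t + A3 t + A4 t"
        unfolding A1_def A2_def A3_def A4_def using E1[OF t] E2[OF t] FL[OF t] FR[OF t]
        by (simp add: dtD dxD dsig algebra_simps)
      ultimately show ?thesis by simp
    qed
    have Fint: "((\<lambda>t. A1 t + A2 t + A3 t + A4 t) has_integral (Fa b - Fa 0)) {0..b}"
      by (rule fundamental_theorem_of_calculus[OF Rb(2)])
        (use dFa in \<open>auto simp: has_real_derivative_iff_has_vector_derivative intro: has_vector_derivative_at_within\<close>)
    have Fab: "Fa b = 0" unfolding Fa_def using Z[OF Rb(1)] by simp
    have Fa0: "Fa 0 = am * IL 0 0 0 + ap * IR 0 0 0" unfolding Fa_def by (simp add: om0)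
    have iA: "A1 integrable_on {0..b}" "A2 integrable_on {0..b}" "A3 integrable_on {0..b}" "A4 integrable_on {0..b}"
      "A5 integrable_on {0..b}"
      using cA1 cA2 cA3 cA4 cA5 by (auto intro: integrable_continuous_interval)
    have sumA: "integral {0..b} A1 + integral {0..b} A2 + (integral {0..b} A3 + integral {0..b} A4)
       = integral {0..b} (\<lambda>t. A1 t + A2 t + A3 t + A4 t)"
      using iA by (simp add: integral_add integrable_add)
    have G1: "((LINT t:{0..}|lborel. A1 t) + (LINT t:{0..}|lborel. A2 t)) + ((LINT t:{0..}|lborel. A3 t) + (LINT t:{0..}|lborel. A4 t))
        = - (LINT x|lborel. \<alpha>0 x * D 0 0 x 0) - 0 * D 0 0 (\<xi> 0) 0"
    proof -
      have "((LINT t:{0..}|lborel. A1 t) + (LINT t:{0..}|lborel. A2 t)) + ((LINT t:{0..}|lborel. A3 t) + (LINT t:{0..}|lborel. A4 t))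
         = integral {0..b} A1 + integral {0..b} A2 + (integral {0..b} A3 + integral {0..b} A4)"
        using S1(2) S2(2) S3(2) S4(2) by simp
      also have "\<dots> = Fa b - Fa 0" using sumA integral_unique[OF Fint] by simp
      finally show ?thesis using Fab Fa0 E0a by simp
    qed
    define Fu where "Fu = (\<lambda>s. ul s * IL 0 0 s + ur s * IR 0 0 s)"
    have dFu: "(Fu has_real_derivative A5 t) (at t)" if t: "t \<in> {0..b}" for t
    proof -
      have "(Fu has_real_derivative (ul t * (\<sigma> t * IL (Suc 0) 0 t + IL 0 (Suc 0) t) + \<mu> * (ua - ul t) * IL 0 0 t)
          + (ur t * (\<sigma> t * IR (Suc 0) 0 t + IR 0 (Suc 0) t) + \<mu> * (ua - ur t) * IR 0 0 t)) (at t)"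
        (is "(_ has_real_derivative ?d) _")
        unfolding Fu_def by (intro DERIV_add DERIV_mult' dIL dIR dul dur)
      moreover have "?d = A5 t"
        unfolding A5_def E3[OF t] sg_avg using FL[OF t] FR[OF t]
        by (simp add: algebra_simps power2_eq_square field_simps)
      ultimately show ?thesis by simp
    qed
    have Fuint: "(A5 has_integral (Fu b - Fu 0)) {0..b}"
      by (rule fundamental_theorem_of_calculus[OF Rb(2)])
        (use dFu in \<open>auto simp: has_real_derivative_iff_has_vector_derivative intro: has_vector_derivative_at_within\<close>)
    have Fub: "Fu b = 0" unfolding Fu_def using Z[OF Rb(1)] by simp
    have G2: "(LINT t:{0..}|lborel. A5 t) = - (LINT x|lborel. u0 x * D 0 0 x 0)"
      using S5(2) integral_unique[OF Fuint] Fub E0u unfolding Fu_def by simp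
    show ?case using G1 G2 by (simp add: psi A1_def A2_def A3_def A4_def A5_def)
  qed
  then show ?thesis using entropy by blast
qed

end
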